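(* Let $\Xi^\natural=\frac12\big(\sum_{i\in[p]}S^\natural_{ii}-\sum_{i\in p+[q]}S^\natural_{ii}\big)\in S^2(\mathfrak o_n)$ and $\Xi=\Phi^{-1}(\Xi^\natural)\in S^2(\mathfrak g)$. Then $$\gamma_2(\Xi)=\Omega_{\mathfrak o_p}-\Omega_{\mathfrak o_q}-\frac{p-q}{p+q}\Omega_{\mathfrak g}.$$
   Context: Let $n=p+q$, $I_{p,q}=\mathrm{diag}(1_p,-1_q)$, $\mathfrak g=\{X\in\mathfrak{gl}_n(\mathbb C):{}^tXI_{p,q}+I_{p,q}X=0\}$, $\mathfrak o_n=\{X\in\mathfrak{gl}_n(\mathbb C):{}^tX+X=0\}$. Write $[p]=\{1,\dots,p\}$, $p+[q]=\{p+1,\dots,n\}$, $\epsilon_i=1$ for $i\in[p]$ and $-1$ otherwise. Put $X_{i,j}=\epsilon_jE_{i,j}-\epsilon_iE_{j,i}\in\mathfrak g$ and $M_{i,j}=E_{i,j}-E_{j,i}\in\mathfrak o_n$. Set $X_{i,j}^\vee=-X_{i,j}$ if $i,j\in[p]$ or $i,j\in p+[q]$, and $X_{i,j}^\vee=X_{i,j}$ otherwise. $\Phi:\mathfrak g\to\mathfrak o_n$, $X\mapsto I_{p,q}^{1/2}XI_{p,q}^{-1/2}$ with $I_{p,q}^{1/2}=\mathrm{diag}(1,\dots,1,\sqrt{-1},\dots,\sqrt{-1})$, extended to tensors. $S^2$ is identified with symmetric 2-tensors; $\gamma_2:S^2(\mathfrak g)\to U(\mathfrak g)$ is the restriction of $a\otimes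 b\mapsto ab$. Define $Q^\natural=\sum_{i,k\in[n]}M_{i,k}\otimes M_{k,i}$ and $S^\natural_{ij}=\frac12\sum_{k\in[n]}(M_{i,k}\otimes M_{k,j}+M_{k,j}\otimes M_{i,k})-\frac1n\delta_{i,j}Q^\natural$. Casimir elements: $\Omega_{\mathfrak g}=\sum_{i<j}X_{i,j}X_{i,j}^\vee$, $\Omega_{\mathfrak o_p}=\sum_{i<j,\ i,j\in[p]}X_{i,j}X_{j,i}$, $\Omega_{\mathfrak o_q}=\sum_{i<j,\ i,j\in p+[q]}X_{i,j}X_{j,i}$. *)

theory Defs
  imports Complex_Main "HOL-Library.Function_Algebras"
begin

text \<open>Matrices: n x n complex matrices as functions nat => nat => complex, indices in {1..n},
  entries outside {1..n}x{1..n} being zero.  Addition/subtraction are pointwise (Function_Algebras);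
  the matrix product is the explicit mmul below (we never use the pointwise product on matrices).\<close>
type_synonym mat = "nat \<Rightarrow> nat \<Rightarrow> complex"

definition supp_mat :: "nat \<Rightarrow> mat \<Rightarrow> bool" where
  "supp_mat n X \<longleftrightarrow> (\<forall>i j. (i \<notin> {1..n} \<or> j \<notin> {1..n}) \<longrightarrow> X i j = 0)"

definition mmul :: "nat \<Rightarrow> mat \<Rightarrow> mat \<Rightarrow> mat" where
  "mmul n A B = (\<lambda>i j. \<Sum>k=1..n. A i k * B k j)"

definition mtransp :: "mat \<Rightarrow> mat" where
  "mtransp A = (\<lambda>i j. A j i)"

definition msc :: "complex \<Rightarrow> mat \<Rightarrow> mat" where
  "msc c A = (\<lambda>i j. c * A i j)"

definition bracket :: "nat \<Rightarrow> mat \<Rightarrow> mat \<Rightarrow> mat" where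
  "bracket n A B = mmul n A B - mmul n B A"

definition Emat :: "nat \<Rightarrow> nat \<Rightarrow> mat" where
  "Emat i j = (\<lambda>a b. if a = i \<and> b = j then 1 else 0)"

definition diagm :: "nat \<Rightarrow> (nat \<Rightarrow> complex) \<Rightarrow> mat" where
  "diagm n d = (\<lambda>a b. if a = b \<and> a \<in> {1..n} then d a else 0)"

definition eps :: "nat \<Rightarrow> nat \<Rightarrow> complex" where
  "eps p i = (if i \<le> p then 1 else -1)"

definition Ipq :: "nat \<Rightarrow> nat \<Rightarrow> mat" where
  "Ipq p q = diagm (p + q) (eps p)"

definition gpq :: "nat \<Rightarrow> nat \<Rightarrow> mat set" where
  "gpq p q = {X. supp_mat (p + q) X \<and>
      mmul (p + q) (mtransp X) (Ipq p q) + mmul (p + q) (Ipq p q) X = 0}"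

definition Xm :: "nat \<Rightarrow> nat \<Rightarrow> nat \<Rightarrow> mat" where
  "Xm p i j = msc (eps p j) (Emat i j) - msc (eps p i) (Emat j i)"

definition Xvee :: "nat \<Rightarrow> nat \<Rightarrow> nat \<Rightarrow> mat" where
  "Xvee p i j = (if (i \<le> p \<longleftrightarrow> j \<le> p) then - Xm p i j else Xm p i j)"

definition Mm :: "nat \<Rightarrow> nat \<Rightarrow> mat" where
  "Mm i j = Emat i j - Emat j i"

definition Ihalf :: "nat \<Rightarrow> nat \<Rightarrow> mat" where
  "Ihalf p q = diagm (p + q) (\<lambda>a. if a \<le> p then 1 else \<i>)"

definition Ihalf_inv :: "nat \<Rightarrow> nat \<Rightarrow> mat" where
  "Ihalf_inv p q = diagm (p + q) (\<lambda>a. if a \<le> p then 1 else - \<i>)"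

definition Phi :: "nat \<Rightarrow> nat \<Rightarrow> mat \<Rightarrow> mat" where
  "Phi p q X = mmul (p + q) (mmul (p + q) (Ihalf p q) X) (Ihalf_inv p q)"

text \<open>Free associative unital algebra on the letters (matrices): elements are formal linear
  combinations of words, i.e. functions mat list => complex (addition pointwise).  Tensors
  a (x) b are represented as the word [a,b]; the tensor algebra T(V) and U(g) are obtained by
  quotienting (see uideal).\<close>
type_synonym fa = "mat list \<Rightarrow> complex"

definition wd :: "mat list \<Rightarrow> fa" where
  "wd u = (\<lambda>w. if w = u then 1 else 0)"

definition gen :: "mat \<Rightarrow> fa" where
  "gen x = wd [x]"

definition fscale :: "complex \<Rightarrow> fa \<Rightarrow> fa" where
  "fscale c f = (\<lambda>w. c * f w)"

definition fmul :: "fa \<Rightarrow> fa \<Rightarrow> fa" where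
  "fmul f g = (\<lambda>w. \<Sum>k\<le>length w. f (take k w) * g (drop k w))"

definition tens :: "mat \<Rightarrow> mat \<Rightarrow> fa" where
  "tens a b = fmul (gen a) (gen b)"

text \<open>Extension of Phi^{-1} to tensors (pushforward of the formal combination along the letterwise
  map Phi^{-1}, i.e. pullback along Phi, restricted to letters supported in [n]x[n], where Phi is
  bijective).\<close>
definition Phi_inv_t :: "nat \<Rightarrow> nat \<Rightarrow> fa \<Rightarrow> fa" where
  "Phi_inv_t p q t = (\<lambda>w. if (\<forall>x\<in>set w. supp_mat (p + q) x) then t (map (Phi p q) w) else 0)"

text \<open>Two-sided ideal of the free algebra on the set G whose quotient is U(g):
  linearity of the generators and x y - y x = [x,y].\<close>
inductive_set uideal :: "nat \<Rightarrow> mat set \<Rightarrow> fa set" for n :: nat and G :: "mat set" where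
  zero: "0 \<in> uideal n G"
| add: "a \<in> uideal n G \<Longrightarrow> b \<in> uideal n G \<Longrightarrow> a + b \<in> uideal n G"
| scale: "a \<in> uideal n G \<Longrightarrow> fscale c a \<in> uideal n G"
| lin_add: "u \<in> lists G \<Longrightarrow> v \<in> lists G \<Longrightarrow> x \<in> G \<Longrightarrow> y \<in> G \<Longrightarrow>
     wd (u @ [x + y] @ v) - wd (u @ [x] @ v) - wd (u @ [y] @ v) \<in> uideal n G"
| lin_sc: "u \<in> lists G \<Longrightarrow> v \<in> lists G \<Longrightarrow> x \<in> G \<Longrightarrow>
     wd (u @ [msc c x] @ v) - fscale c (wd (u @ [x] @ v)) \<in> uideal n G"
| comm: "u \<in> lists G \<Longrightarrow> v \<in> lists G \<Longrightarrow> x \<in> G \<Longrightarrow> y \<in> G \<Longrightarrow>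
     wd (u @ [x, y] @ v) - wd (u @ [y, x] @ v) - wd (u @ [bracket n x y] @ v) \<in> uideal n G"

definition ueq :: "nat \<Rightarrow> nat \<Rightarrow> fa \<Rightarrow> fa \<Rightarrow> bool" where
  "ueq p q A B \<longleftrightarrow> A - B \<in> uideal (p + q) (gpq p q)"

text \<open>gamma_2 : S^2(g) -> U(g), a (x) b |-> ab.  With tensors represented in the free algebra,
  a (x) b = [a][b] already, so gamma_2 is the identity on representatives (the quotient map
  to U(g) is taken by ueq).\<close>
definition gamma2 :: "fa \<Rightarrow> fa" where
  "gamma2 t = t"

definition Qnat :: "nat \<Rightarrow> fa" where
  "Qnat n = (\<Sum>i\<in>{1..n}. \<Sum>k\<in>{1..n}. tens (Mm i k) (Mm k i))"

definition Snat :: "nat \<Rightarrow> nat \<Rightarrow> nat \<Rightarrow> fa" where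
  "Snat n i j = fscale (1/2) (\<Sum>k\<in>{1..n}. tens (Mm i k) (Mm k j) + tens (Mm k j) (Mm i k))
      - fscale ((1 / of_nat n) * (if i = j then 1 else 0)) (Qnat n)"

definition Xi_nat :: "nat \<Rightarrow> nat \<Rightarrow> fa" where
  "Xi_nat p q = fscale (1/2) ((\<Sum>i\<in>{1..p}. Snat (p + q) i i) - (\<Sum>i\<in>{p+1..p+q}. Snat (p + q) i i))"

definition Xi :: "nat \<Rightarrow> nat \<Rightarrow> fa" where
  "Xi p q = Phi_inv_t p q (Xi_nat p q)"

definition Omega_g :: "nat \<Rightarrow> nat \<Rightarrow> fa" where
  "Omega_g p q = (\<Sum>(i,j)\<in>{(i,j). 1 \<le> i \<and> i < j \<and> j \<le> p + q}.
      fmul (gen (Xm p i j)) (gen (Xvee p i j)))"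

definition Omega_op :: "nat \<Rightarrow> fa" where
  "Omega_op p = (\<Sum>(i,j)\<in>{(i,j). 1 \<le> i \<and> i < j \<and> j \<le> p}.
      fmul (gen (Xm p i j)) (gen (Xm p j i)))"

definition Omega_oq :: "nat \<Rightarrow> nat \<Rightarrow> fa" where
  "Omega_oq p q = (\<Sum>(i,j)\<in>{(i,j). p + 1 \<le> i \<and> i < j \<and> j \<le> p + q}.
      fmul (gen (Xm p i j)) (gen (Xm p j i)))"

end

theory Submission
  imports Defs
begin


lemma sum_fapply: "(\<Sum>i\<in>A. f i) w = (\<Sum>i\<in>A. f i w)"
  by (induction A rule: infinite_finite_induct) auto

lemma diagm_left: "mmul n (diagm n d) X = (\<lambda>a b. if a \<in> {1..n} then d a * X a b else 0)"
proof (intro ext)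
  fix a b
  have "(\<Sum>k=1..n. diagm n d a k * X k b) = (\<Sum>k=1..n. if k = a then (if a \<in> {1..n} then d a * X a b else 0) else 0)"
    by (rule sum.cong) (auto simp: diagm_def)
  then show "mmul n (diagm n d) X a b = (if a \<in> {1..n} then d a * X a b else 0)"
    unfolding mmul_def by simp
qed

lemma diagm_right: "mmul n X (diagm n d) = (\<lambda>a b. if b \<in> {1..n} then X a b * d b else 0)"
proof (intro ext)
  fix a b
  have "(\<Sum>k=1..n. X a k * diagm n d k b) = (\<Sum>k=1..n. if k = b then (if b \<in> {1..n} then X a b * d b else 0) else 0)"
    by (rule sum.cong) (auto simp: diagm_def)
  then show "mmul n X (diagm n d) a b = (if b \<in> {1..n} then X a b * d b else 0)"
    unfolding mmul_def by simp
qed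

lemma Phi_apply: "Phi p q X a b = (if a \<in> {1..p+q} \<and> b \<in> {1..p+q} then
   (if a \<le> p then 1 else \<i>) * X a b * (if b \<le> p then 1 else - \<i>) else 0)"
  unfolding Phi_def Ihalf_def Ihalf_inv_def diagm_left diagm_right by auto

lemma gpq_iff: "X \<in> gpq p q \<longleftrightarrow> supp_mat (p+q) X \<and>
   (\<forall>a\<in>{1..p+q}. \<forall>b\<in>{1..p+q}. X b a * eps p b + eps p a * X a b = 0)"
proof (cases "supp_mat (p+q) X")
  case True
  have "mmul (p + q) (mtransp X) (Ipq p q) + mmul (p + q) (Ipq p q) X
     = (\<lambda>a b. if a \<in> {1..p+q} \<and> b \<in> {1..p+q} then X b a * eps p b + eps p a * X a b else 0)"
    unfolding Ipq_def diagm_left diagm_right mtransp_def using True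
    by (intro ext) (auto simp: supp_mat_def)
  then show ?thesis unfolding gpq_def using True by (auto simp: fun_eq_iff)
next
  case False
  then show ?thesis unfolding gpq_def by auto
qed

lemma msc_apply: "msc c X a b = c * X a b" unfolding msc_def by simp

lemma msc_in: assumes "X \<in> gpq p q" shows "msc c X \<in> gpq p q"
proof -
  have e: "msc c X b a * eps p b + eps p a * msc c X a b = c * (X b a * eps p b + eps p a * X a b)" for a b
    unfolding msc_apply by (simp add: algebra_simps)
  show ?thesis using assms unfolding gpq_iff supp_mat_def e by (auto simp: msc_apply)
qed

lemma zero_in: "0 \<in> gpq p q"
  unfolding gpq_iff supp_mat_def by auto

lemma Emat_apply: "Emat i k a b = (if a = i \<and> b = k then 1 else 0)" unfolding Emat_def by simp

lemma Xm_apply: "Xm p i k a b = (if a = i \<and> b = k then eps p k else 0) - (if a = k \<and> b = i then eps p i else 0)"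
  unfolding Xm_def fun_diff_def msc_apply Emat_apply
  by (simp only: mult_1_right mult_zero_right if_distrib[of "\<lambda>x. eps p k * x"] if_distrib[of "\<lambda>x. eps p i * x"])

lemma Xm_diag: "Xm p i i = 0"
  by (intro ext) (simp add: Xm_apply)

lemma Xm_in: assumes "i \<in> {1..p+q}" "k \<in> {1..p+q}" shows "Xm p i k \<in> gpq p q"
proof (cases "i = k")
  case True
  then show ?thesis using zero_in by (simp add: Xm_diag)
next
  case False
  have s: "supp_mat (p+q) (Xm p i k)" using assms unfolding supp_mat_def Xm_apply by auto
  have c: "Xm p i k b a * eps p b + eps p a * Xm p i k a b = 0" for a b
    using False unfolding Xm_apply by (auto simp: algebra_simps)
  show ?thesis unfolding gpq_iff using s c by blast
qed

lemma neg_eq_msc: "- X = msc (-1) X"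
  unfolding msc_def by (auto simp: fun_eq_iff)

lemma Xvee_in: "i \<in> {1..p+q} \<Longrightarrow> k \<in> {1..p+q} \<Longrightarrow> Xvee p i k \<in> gpq p q"
  unfolding Xvee_def using Xm_in msc_in neg_eq_msc by metis

lemma Phi_inj: "supp_mat (p+q) X \<Longrightarrow> supp_mat (p+q) Y \<Longrightarrow> Phi p q X = Phi p q Y \<Longrightarrow> X = Y"
proof (intro ext)
  fix a b assume sx: "supp_mat (p+q) X" and sy: "supp_mat (p+q) Y" and e: "Phi p q X = Phi p q Y"
  show "X a b = Y a b"
  proof (cases "a \<in> {1..p+q} \<and> b \<in> {1..p+q}")
    case True
    have "Phi p q X a b = Phi p q Y a b" using e by simp
    with True show ?thesis unfolding Phi_apply by (auto split: if_splits)
  next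
    case False
    then show ?thesis using sx sy unfolding supp_mat_def by auto
  qed
qed

definition ca :: "nat \<Rightarrow> nat \<Rightarrow> nat \<Rightarrow> complex" where
  "ca p i k = (if i \<le> p \<and> k \<le> p then 1 else if p < i \<and> p < k then -1 else - \<i>)"
definition cb :: "nat \<Rightarrow> nat \<Rightarrow> nat \<Rightarrow> complex" where
  "cb p i k = (if i \<le> p \<and> k \<le> p then 1 else if p < i \<and> p < k then -1 else \<i>)"

lemma cab: "ca p i k * cb p i k = 1"
  unfolding ca_def cb_def by simp

lemma Mm_apply: "Mm i k a b = (if a = i \<and> b = k then 1 else 0) - (if a = k \<and> b = i then 1 else 0)"
  unfolding Mm_def fun_diff_def Emat_apply by (rule refl)

lemma Mm_diag: "Mm i i = 0"
  by (intro ext) (simp add: Mm_apply)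

lemma Phi_zero: "Phi p q 0 = 0"
  by (intro ext) (simp add: Phi_apply)

lemma msc_zero: "msc c 0 = 0"
  by (intro ext) (simp add: msc_apply)

lemma Xvee_apply: "Xvee p i k a b = (if (i \<le> p \<longleftrightarrow> k \<le> p) then - Xm p i k a b else Xm p i k a b)"
  unfolding Xvee_def by auto

lemma Phi_Xm: assumes "i \<in> {1..p+q}" "k \<in> {1..p+q}" shows "Phi p q (msc (ca p i k) (Xm p i k)) = Mm i k"
proof (cases "i = k")
  case True
  then show ?thesis by (simp add: Xm_diag Mm_diag msc_zero Phi_zero)
next
  case False
  show ?thesis
  proof (intro ext)
    fix a b
    consider "a = i \<and> b = k" | "a = k \<and> b = i" | "\<not> (a = i \<and> b = k) \<and> \<not> (a = k \<and> b = i)" by blast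
    then show "Phi p q (msc (ca p i k) (Xm p i k)) a b = Mm i k a b"
    proof cases
      case 1
      then have e: "a = i" "b = k" by auto
      show ?thesis unfolding e using False assms
        by (simp add: Phi_apply msc_apply Xm_apply Mm_apply ca_def eps_def)
    next
      case 2
      then have e: "a = k" "b = i" by auto
      show ?thesis unfolding e using False assms
        by (simp add: Phi_apply msc_apply Xm_apply Mm_apply ca_def eps_def)
    next
      case 3
      then have c1: "\<not> (a = i \<and> b = k)" and c2: "\<not> (a = k \<and> b = i)" by auto
      have "Mm i k a b = 0" "Xm p i k a b = 0"
        unfolding Mm_apply Xm_apply if_not_P[OF c1] if_not_P[OF c2] by simp_all
      then show ?thesis unfolding Phi_apply msc_apply by simp
    qed
  qed
qed

lemma Phi_Xvee: assumes "i \<in> {1..p+q}" "k \<in> {1..p+q}" shows "Phi p q (msc (cb p i k) (Xvee p i k)) = Mm k i"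
proof (cases "i = k")
  case True
  then show ?thesis by (simp add: Xvee_def Xm_diag Mm_diag msc_zero Phi_zero)
next
  case False
  show ?thesis
  proof (intro ext)
    fix a b
    consider "a = i \<and> b = k" | "a = k \<and> b = i" | "\<not> (a = i \<and> b = k) \<and> \<not> (a = k \<and> b = i)" by blast
    then show "Phi p q (msc (cb p i k) (Xvee p i k)) a b = Mm k i a b"
    proof cases
      case 1
      then have e: "a = i" "b = k" by auto
      show ?thesis unfolding e using False assms
        by (simp add: Phi_apply msc_apply Xvee_apply Xm_apply Mm_apply cb_def eps_def)
    next
      case 2
      then have e: "a = k" "b = i" by auto
      show ?thesis unfolding e using False assms
        by (simp add: Phi_apply msc_apply Xvee_apply Xm_apply Mm_apply cb_def eps_def)
    next
      case 3
      then have c1: "\<not> (a = i \<and> b = k)" and c2: "\<not> (a = k \<and> b = i)" by auto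
      have "Mm k i a b = 0" "Xm p i k a b = 0"
        unfolding Mm_apply Xm_apply if_not_P[OF c1] if_not_P[OF c2] by simp_all
      then show ?thesis unfolding Phi_apply msc_apply Xvee_apply by simp
    qed
  qed
qed



lemma fscale_apply: "fscale c f w = c * f w" unfolding fscale_def by simp

lemma I_diff: "a \<in> uideal n G \<Longrightarrow> b \<in> uideal n G \<Longrightarrow> a - b \<in> uideal n G"
proof -
  assume a: "a \<in> uideal n G" and b: "b \<in> uideal n G"
  have e: "a - b = a + fscale (-1) b" by (intro ext) (simp add: fscale_apply)
  show ?thesis unfolding e by (rule uideal.add[OF a uideal.scale[OF b]])
qed

lemma I_sum: "(\<And>i. i \<in> A \<Longrightarrow> f i \<in> uideal n G) \<Longrightarrow> sum f A \<in> uideal n G"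
  by (induction A rule: infinite_finite_induct) (auto intro: uideal.intros)

lemma I_plus: "a \<in> uideal n G \<Longrightarrow> b \<in> uideal n G \<Longrightarrow> a + b \<in> uideal n G"
  by (rule uideal.add)

lemma fscale_diff: "fscale c (f - g) = fscale c f - fscale c g"
  by (intro ext) (simp add: fscale_apply algebra_simps)

lemma fscale_fscale: "fscale c (fscale d f) = fscale (c * d) f"
  by (intro ext) (simp add: fscale_apply)

lemma fscale_one: "fscale 1 f = f"
  by (intro ext) (simp add: fscale_apply)

lemma wd2_scale:
  assumes "x \<in> G" "y \<in> G" "msc d y \<in> G"
  shows "wd [msc c x, msc d y] - fscale (c * d) (wd [x, y]) \<in> uideal n G"
proof -
  have 1: "wd ([] @ [msc c x] @ [msc d y]) - fscale c (wd ([] @ [x] @ [msc d y])) \<in> uideal n G"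
    using assms by (intro uideal.lin_sc) auto
  have 2: "wd ([x] @ [msc d y] @ []) - fscale d (wd ([x] @ [y] @ [])) \<in> uideal n G"
    using assms by (intro uideal.lin_sc) auto
  have e: "wd [msc c x, msc d y] - fscale (c * d) (wd [x, y])
     = (wd ([] @ [msc c x] @ [msc d y]) - fscale c (wd ([] @ [x] @ [msc d y])))
       + fscale c (wd ([x] @ [msc d y] @ []) - fscale d (wd ([x] @ [y] @ [])))"
    by (simp add: fscale_diff fscale_fscale)
  show ?thesis unfolding e by (rule I_plus[OF 1 uideal.scale[OF 2]])
qed

lemma wd00: "(0::mat) \<in> G \<Longrightarrow> wd [0, 0] \<in> uideal n G"
proof -
  assume z: "(0::mat) \<in> G"
  have "wd ([] @ [msc 0 0] @ [0]) - fscale 0 (wd ([] @ [0] @ [0])) \<in> uideal n G"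
    using z by (intro uideal.lin_sc) auto
  moreover have "wd ([] @ [msc 0 0] @ [0]) - fscale 0 (wd ([] @ [0] @ [0])) = wd [0, 0]"
    by (intro ext) (simp add: fscale_apply msc_zero)
  ultimately show ?thesis by simp
qed

lemma PI_plus: "Phi_inv_t p q (f + g) = Phi_inv_t p q f + Phi_inv_t p q g"
  unfolding Phi_inv_t_def by (intro ext) simp
lemma PI_diff: "Phi_inv_t p q (f - g) = Phi_inv_t p q f - Phi_inv_t p q g"
  unfolding Phi_inv_t_def by (intro ext) simp
lemma PI_scale: "Phi_inv_t p q (fscale c f) = fscale c (Phi_inv_t p q f)"
  unfolding Phi_inv_t_def fscale_def by (intro ext) simp
lemma PI_sum: "Phi_inv_t p q (sum f A) = (\<Sum>i\<in>A. Phi_inv_t p q (f i))"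
proof (intro ext)
  fix w show "Phi_inv_t p q (sum f A) w = (\<Sum>i\<in>A. Phi_inv_t p q (f i)) w"
  proof (cases "\<forall>x\<in>set w. supp_mat (p + q) x")
    case True then show ?thesis unfolding Phi_inv_t_def sum_fapply by simp
  next
    case False then show ?thesis unfolding Phi_inv_t_def sum_fapply
      by (simp only: if_not_P[OF False] if_False sum.neutral_const)
  qed
qed

lemma tens_wd: "tens a b = wd [a, b]"
proof (intro ext)
  fix w :: "mat list"
  have "(\<Sum>k\<le>length w. gen a (take k w) * gen b (drop k w))
      = (\<Sum>k\<le>length w. if k = 1 then (if w = [a, b] then 1 else 0) else 0)"
  proof (rule sum.cong)
    fix k assume "k \<in> {..length w}"
    show "gen a (take k w) * gen b (drop k w) = (if k = 1 then (if w = [a, b] then 1 else 0) else 0)"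
    proof (cases "k = 1")
      case True
      then show ?thesis unfolding gen_def wd_def
        by (cases w) auto
    next
      case False
      have "take k w \<noteq> [a] \<or> drop k w \<noteq> [b]"
      proof (rule ccontr)
        assume h: "\<not> (take k w \<noteq> [a] \<or> drop k w \<noteq> [b])"
        then have "length (take k w) = 1" by simp
        moreover have "length (drop k w) = 1" using h by simp
        ultimately show False using False by simp
      qed
      then show ?thesis using False unfolding gen_def wd_def by auto
    qed
  qed simp
  also have "\<dots> = (if w = [a, b] then 1 else 0)"
    by (cases w) auto
  finally show "tens a b w = wd [a, b] w" unfolding tens_def fmul_def wd_def by simp
qed

lemma PI_wd2:
  assumes "supp_mat (p+q) x" "supp_mat (p+q) y"
  shows "Phi_inv_t p q (wd [Phi p q x, Phi p q y]) = wd [x, y]"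
proof (intro ext)
  fix w
  show "Phi_inv_t p q (wd [Phi p q x, Phi p q y]) w = wd [x, y] w"
  proof (cases "(\<forall>u\<in>set w. supp_mat (p + q) u) \<and> map (Phi p q) w = [Phi p q x, Phi p q y]")
    case True
    then obtain u v where w: "w = [u, v]" by (cases w; cases "tl w") auto
    with True have "Phi p q u = Phi p q x" "Phi p q v = Phi p q y" "supp_mat (p+q) u" "supp_mat (p+q) v" by auto
    then have "u = x" "v = y" using Phi_inj assms by blast+
    then show ?thesis using True w unfolding Phi_inv_t_def wd_def by simp
  next
    case False
    have "w \<noteq> [x, y]"
    proof
      assume "w = [x, y]" then show False using False assms by simp
    qed
    then show ?thesis using False unfolding Phi_inv_t_def wd_def by auto
  qed
qed



definition Yw :: "nat \<Rightarrow> nat \<Rightarrow> nat \<Rightarrow> fa" where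
  "Yw p i k = wd [Xm p i k, Xvee p i k]"

definition Zw :: "nat \<Rightarrow> nat \<Rightarrow> nat \<Rightarrow> fa" where
  "Zw p i k = (if i < k then Yw p i k else if k < i then Yw p k i else 0)"

definition Tw :: "nat \<Rightarrow> nat \<Rightarrow> nat \<Rightarrow> nat \<Rightarrow> fa" where
  "Tw p q i k = Phi_inv_t p q (tens (Mm i k) (Mm k i))"

lemma Zw_sym: "Zw p i k = Zw p k i"
  unfolding Zw_def by auto

lemma Xm_swap: "Xm p k i = msc (-1) (Xm p i k)"
  by (intro ext) (simp add: Xm_apply msc_apply split del: if_split)

lemma Xvee_swap: "Xvee p k i = msc (-1) (Xvee p i k)"
proof (cases "i \<le> p \<longleftrightarrow> k \<le> p")
  case True
  then have "k \<le> p \<longleftrightarrow> i \<le> p" by blast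
  then have "Xvee p k i = - Xm p k i" "Xvee p i k = - Xm p i k" using True unfolding Xvee_def by simp_all
  then show ?thesis unfolding Xm_swap[of p k i] by (intro ext) (simp add: msc_apply)
next
  case False
  then have "\<not> (k \<le> p \<longleftrightarrow> i \<le> p)" by blast
  then have "Xvee p k i = Xm p k i" "Xvee p i k = Xm p i k" using False unfolding Xvee_def by simp_all
  then show ?thesis unfolding Xm_swap[of p k i] by simp
qed

lemma supp_of_gpq: "X \<in> gpq p q \<Longrightarrow> supp_mat (p+q) X"
  unfolding gpq_def by simp

lemma Tw_eq: assumes "i \<in> {1..p+q}" "k \<in> {1..p+q}"
  shows "Tw p q i k = wd [msc (ca p i k) (Xm p i k), msc (cb p i k) (Xvee p i k)]"
proof -
  have "Tw p q i k = Phi_inv_t p q (wd [Phi p q (msc (ca p i k) (Xm p i k)), Phi p q (msc (cb p i k) (Xvee p i k))])"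
    unfolding Tw_def tens_wd Phi_Xm[OF assms] Phi_Xvee[OF assms] ..
  also have "\<dots> = wd [msc (ca p i k) (Xm p i k), msc (cb p i k) (Xvee p i k)]"
    by (intro PI_wd2 supp_of_gpq msc_in Xm_in Xvee_in assms)
  finally show ?thesis .
qed

lemma TY: assumes "i \<in> {1..p+q}" "k \<in> {1..p+q}"
  shows "Tw p q i k - Yw p i k \<in> uideal (p+q) (gpq p q)"
  unfolding Tw_eq[OF assms] Yw_def
  using wd2_scale[of "Xm p i k" "gpq p q" "Xvee p i k" "cb p i k" "ca p i k" "p+q"]
  using Xm_in[OF assms] Xvee_in[OF assms] msc_in by (simp add: cab fscale_one)

lemma YY: assumes "i \<in> {1..p+q}" "k \<in> {1..p+q}"
  shows "Yw p k i - Yw p i k \<in> uideal (p+q) (gpq p q)"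
  unfolding Yw_def Xm_swap[of p k i] Xvee_swap[of p k i]
  using wd2_scale[of "Xm p i k" "gpq p q" "Xvee p i k" "-1" "-1" "p+q"]
  using Xm_in[OF assms] Xvee_in[OF assms] msc_in by (simp add: fscale_one)

lemma Ydiag: "Yw p i i \<in> uideal (p+q) (gpq p q)"
proof -
  have "Xvee p i i = 0" unfolding Xvee_def by (simp add: Xm_diag)
  then show ?thesis unfolding Yw_def by (simp add: Xm_diag wd00 zero_in)
qed

lemma TZ: assumes "i \<in> {1..p+q}" "k \<in> {1..p+q}"
  shows "Tw p q i k - Zw p i k \<in> uideal (p+q) (gpq p q)"
proof -
  consider "i < k" | "k < i" | "i = k" by linarith
  then show ?thesis
  proof cases
    case 1 then show ?thesis unfolding Zw_def using TY[OF assms] by simp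
  next
    case 2
    have e: "Tw p q i k - Zw p i k = (Tw p q i k - Yw p i k) + (Yw p i k - Yw p k i)"
      unfolding Zw_def using 2 by simp
    show ?thesis unfolding e by (rule I_plus[OF TY[OF assms] YY[OF assms(2,1)]])
  next
    case 3
    have e: "Tw p q i k - Zw p i k = (Tw p q i k - Yw p i k) + Yw p i k"
      unfolding Zw_def using 3 by simp
    show ?thesis unfolding e using I_plus[OF TY[OF assms] Ydiag[of p i q]] 3 by simp
  qed
qed



lemma half_sum:
  fixes z :: "nat \<Rightarrow> nat \<Rightarrow> complex"
  assumes sym: "\<And>i k. z i k = z k i" and diag: "\<And>i. z i i = 0"
  shows "(\<Sum>i\<in>A. \<Sum>k\<in>A. z i k) = 2 * (\<Sum>i\<in>A. \<Sum>k\<in>A. if i < k then z i k else 0)"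
proof -
  have "(\<Sum>i\<in>A. \<Sum>k\<in>A. z i k) = (\<Sum>i\<in>A. \<Sum>k\<in>A. (if i < k then z i k else 0) + (if k < i then z i k else 0))"
  proof (intro sum.cong refl)
    fix i k
    show "z i k = (if i < k then z i k else 0) + (if k < i then z i k else 0)"
      using diag[of i] by (cases "i < k"; cases "k < i") auto
  qed
  also have "\<dots> = (\<Sum>i\<in>A. \<Sum>k\<in>A. if i < k then z i k else 0) + (\<Sum>i\<in>A. \<Sum>k\<in>A. if k < i then z i k else 0)"
    by (simp add: sum.distrib)
  also have "(\<Sum>i\<in>A. \<Sum>k\<in>A. if k < i then z i k else 0) = (\<Sum>k\<in>A. \<Sum>i\<in>A. if k < i then z i k else 0)"
    by (rule sum.swap)
  also have "\<dots> = (\<Sum>i\<in>A. \<Sum>k\<in>A. if i < k then z i k else 0)"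
    by (intro sum.cong refl) (metis sym)
  finally show ?thesis by simp
qed

lemma key:
  fixes z :: "nat \<Rightarrow> nat \<Rightarrow> complex" and p q :: nat
  assumes sym: "\<And>i k. z i k = z k i" and diag: "\<And>i. z i i = 0"
  defines "U \<equiv> \<lambda>A. (\<Sum>i\<in>A. \<Sum>k\<in>A. if i < k then z i k else 0)"
  shows "(1/2) * ((\<Sum>i\<in>{1..p}. (1/2) * (\<Sum>k\<in>{1..p+q}. z i k + z k i)
              - (1 / of_nat (p+q)) * (\<Sum>a\<in>{1..p+q}. \<Sum>b\<in>{1..p+q}. z a b))
          - (\<Sum>i\<in>{p+1..p+q}. (1/2) * (\<Sum>k\<in>{1..p+q}. z i k + z k i)
              - (1 / of_nat (p+q)) * (\<Sum>a\<in>{1..p+q}. \<Sum>b\<in>{1..p+q}. z a b)))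
     = U {1..p} - U {p+1..p+q} - ((of_nat p - of_nat q) / (of_nat p + of_nat q)) * U {1..p+q}"
proof -
  define P where "P = {1..p}"
  define Q where "Q = {p+1..p+q}"
  define N where "N = {1..p+q}"
  have N: "N = P \<union> Q" unfolding N_def P_def Q_def by auto
  have disj: "P \<inter> Q = {}" unfolding P_def Q_def by auto
  have fin: "finite P" "finite Q" unfolding P_def Q_def by auto
  have cP: "card P = p" and cQ: "card Q = q" unfolding P_def Q_def by auto
  have h: "(\<Sum>i\<in>A. \<Sum>k\<in>A. z i k) = 2 * U A" for A unfolding U_def by (rule half_sum[OF sym diag])
  have inner: "(\<Sum>k\<in>N. z i k + z k i) = 2 * (\<Sum>k\<in>N. z i k)" for i
  proof -
    have "(\<Sum>k\<in>N. z i k + z k i) = (\<Sum>k\<in>N. 2 * z i k)"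
      by (intro sum.cong refl) (metis sym mult_2)
    then show ?thesis by (simp add: sum_distrib_left)
  qed
  have splitk: "(\<Sum>k\<in>N. z i k) = (\<Sum>k\<in>P. z i k) + (\<Sum>k\<in>Q. z i k)" for i
    unfolding N by (rule sum.union_disjoint[OF fin disj])
  have cross: "(\<Sum>i\<in>Q. \<Sum>k\<in>P. z i k) = (\<Sum>i\<in>P. \<Sum>k\<in>Q. z i k)"
    using sym by (subst sum.swap) simp
  define C where "C = (1 / of_nat (p+q)) * (\<Sum>a\<in>N. \<Sum>b\<in>N. z a b)"
  have C: "C = (1 / of_nat (p+q)) * (2 * U N)" unfolding C_def h ..
  have a: "(1/2) * (\<Sum>k\<in>N. z i k + z k i) - C = (\<Sum>k\<in>P. z i k) + (\<Sum>k\<in>Q. z i k) - C" for i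
    unfolding inner splitk by simp
  have sP: "(\<Sum>i\<in>P. (1/2) * (\<Sum>k\<in>N. z i k + z k i) - C) = 2 * U P + (\<Sum>i\<in>P. \<Sum>k\<in>Q. z i k) - of_nat p * C"
    apply (subst sum.cong[OF refl a])
    unfolding sum_subtractf sum.distrib h by (simp add: cP)
  have sQ: "(\<Sum>i\<in>Q. (1/2) * (\<Sum>k\<in>N. z i k + z k i) - C) = 2 * U Q + (\<Sum>i\<in>P. \<Sum>k\<in>Q. z i k) - of_nat q * C"
    apply (subst sum.cong[OF refl a])
    unfolding sum_subtractf sum.distrib h cross by (simp add: cQ)
  have dq: "(of_nat p - of_nat q) / (of_nat p + of_nat q) = (of_nat p - of_nat q) * (1 / (of_nat (p+q) :: complex))"
    by simp
  have alg: "(1/2) * ((2 * U P + X - of_nat p * C) - (2 * U Q + X - of_nat q * C))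
     = U P - U Q - ((of_nat p - of_nat q) / (of_nat p + of_nat q)) * U N" for X :: complex
  proof -
    have gen: "(1/2) * ((2 * a + X - x * (d * (2 * u))) - (2 * b + X - y * (d * (2 * u)))) = a - b - ((x - y) * d) * u"
      for a b u x y d :: complex by (simp add: algebra_simps)
    show ?thesis unfolding C dq by (rule gen)
  qed
  have "(1/2) * ((\<Sum>i\<in>P. (1/2) * (\<Sum>k\<in>N. z i k + z k i) - C) - (\<Sum>i\<in>Q. (1/2) * (\<Sum>k\<in>N. z i k + z k i) - C))
      = U P - U Q - ((of_nat p - of_nat q) / (of_nat p + of_nat q)) * U N"
    unfolding sP sQ by (rule alg)
  then show ?thesis unfolding P_def Q_def N_def C_def by simp
qed



definition SS :: "(nat \<Rightarrow> nat \<Rightarrow> fa) \<Rightarrow> nat \<Rightarrow> nat \<Rightarrow> fa" where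
  "SS F n i = fscale (1/2) (\<Sum>k\<in>{1..n}. F i k + F k i) - fscale (1 / of_nat n) (\<Sum>a\<in>{1..n}. \<Sum>b\<in>{1..n}. F a b)"

definition EE :: "(nat \<Rightarrow> nat \<Rightarrow> fa) \<Rightarrow> nat \<Rightarrow> nat \<Rightarrow> fa" where
  "EE F p q = fscale (1/2) ((\<Sum>i\<in>{1..p}. SS F (p+q) i) - (\<Sum>i\<in>{p+1..p+q}. SS F (p+q) i))"

lemma Xi_EE: "Xi p q = EE (Tw p q) p q"
  unfolding Xi_def Xi_nat_def Snat_def Qnat_def EE_def SS_def Tw_def
  by (simp add: PI_scale PI_diff PI_sum PI_plus)

lemma EE_in: assumes "\<And>i k. i \<in> {1..p+q} \<Longrightarrow> k \<in> {1..p+q} \<Longrightarrow> H i k \<in> uideal (p+q) G"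
  shows "EE H p q \<in> uideal (p+q) G"
proof -
  have s: "SS H (p+q) i \<in> uideal (p+q) G" if "i \<in> {1..p+q}" for i
    unfolding SS_def using assms that
    by (intro I_diff uideal.scale I_sum I_plus) auto
  show ?thesis unfolding EE_def
    by (intro uideal.scale I_diff I_sum s) auto
qed

lemma EE_apply: "EE F p q w = (1/2) * ((\<Sum>i\<in>{1..p}. (1/2) * (\<Sum>k\<in>{1..p+q}. F i k w + F k i w)
              - (1 / of_nat (p+q)) * (\<Sum>a\<in>{1..p+q}. \<Sum>b\<in>{1..p+q}. F a b w))
          - (\<Sum>i\<in>{p+1..p+q}. (1/2) * (\<Sum>k\<in>{1..p+q}. F i k w + F k i w)
              - (1 / of_nat (p+q)) * (\<Sum>a\<in>{1..p+q}. \<Sum>b\<in>{1..p+q}. F a b w)))"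
  unfolding EE_def SS_def by (simp add: fscale_apply sum_fapply)

lemma SS_apply: "SS F n i w = (1/2) * (\<Sum>k\<in>{1..n}. F i k w + F k i w) - (1 / of_nat n) * (\<Sum>a\<in>{1..n}. \<Sum>b\<in>{1..n}. F a b w)"
  unfolding SS_def by (simp add: fscale_apply sum_fapply)

lemma SS_diff: "SS (\<lambda>i k. F i k - G i k) n i = SS F n i - SS G n i"
proof (intro ext)
  fix w
  have 1: "(\<Sum>k\<in>{1..n}. (F i k w - G i k w) + (F k i w - G k i w)) = (\<Sum>k\<in>{1..n}. (F i k w + F k i w) - (G i k w + G k i w))"
    by (intro sum.cong refl) (simp add: algebra_simps)
  have h5: "(\<Sum>k\<in>{1..n}. (F i k w + F k i w) - (G i k w + G k i w)) = (\<Sum>k\<in>{1..n}. F i k w + F k i w) - (\<Sum>k\<in>{1..n}. G i k w + G k i w)"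
    by (rule sum_subtractf)
  have 2: "(\<Sum>a\<in>{1..n}. \<Sum>b\<in>{1..n}. F a b w - G a b w) = (\<Sum>a\<in>{1..n}. \<Sum>b\<in>{1..n}. F a b w) - (\<Sum>a\<in>{1..n}. \<Sum>b\<in>{1..n}. G a b w)"
    by (simp only: sum_subtractf)
  have 3: "(SS F n i - SS G n i) w = SS F n i w - SS G n i w" by simp
  have 4: "SS (\<lambda>i k. F i k - G i k) n i w = (1/2) * (\<Sum>k\<in>{1..n}. (F i k w - G i k w) + (F k i w - G k i w)) - (1 / of_nat n) * (\<Sum>a\<in>{1..n}. \<Sum>b\<in>{1..n}. F a b w - G a b w)"
    unfolding SS_apply by simp
  have gen: "(1/2) * (A - B) - c * (C - D) = ((1/2) * A - c * C) - ((1/2) * B - c * D)" for A B C D c :: complex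
    by (simp add: field_simps)
  show "SS (\<lambda>i k. F i k - G i k) n i w = (SS F n i - SS G n i) w"
    unfolding 3 SS_apply minus_apply 1 h5 2 by (rule gen)
qed

lemma EE_diff: "EE F p q - EE G p q = EE (\<lambda>i k. F i k - G i k) p q"
proof (intro ext)
  fix w
  have e: "EE H p q w = (1/2) * ((\<Sum>i\<in>{1..p}. SS H (p+q) i w) - (\<Sum>i\<in>{p+1..p+q}. SS H (p+q) i w))" for H
    unfolding EE_def by (simp add: fscale_apply sum_fapply)
  have 3: "(SS F n i - SS G n i) w = SS F n i w - SS G n i w" for n i by simp
  have gen: "(1/2) * (A - B) - (1/2) * (C - D) = (1/2) * ((A - C) - (B - D))" for A B C D :: complex
    by (simp add: field_simps)
  show "(EE F p q - EE G p q) w = EE (\<lambda>i k. F i k - G i k) p q w"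
    unfolding e SS_diff 3 sum_subtractf minus_apply by (rule gen)
qed

lemma if_fapply: "(if c then f else 0) w = (if c then (f w :: complex) else 0)"
  by simp

lemma pairsum: "(\<Sum>(i,j)\<in>{(i,j). (a::nat) \<le> i \<and> i < j \<and> j \<le> b}. f i j) = (\<Sum>i\<in>{a..b}. \<Sum>j\<in>{a..b}. if i < j then f i j else 0)"
proof -
  have e: "{(i,j). a \<le> i \<and> i < j \<and> j \<le> b} = Sigma {a..b} (\<lambda>i. {j\<in>{a..b}. i < j})" by auto
  have s: "sum (case_prod f) (Sigma {a..b} (\<lambda>i. {j\<in>{a..b}. i < j})) = (\<Sum>i\<in>{a..b}. \<Sum>j\<in>{j\<in>{a..b}. i < j}. f i j)"
    by (rule sum.Sigma[symmetric]) auto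
  have f: "(\<Sum>j\<in>{j\<in>{a..b}. i < j}. f i j) = (\<Sum>j\<in>{a..b}. if i < j then f i j else 0)" for i
    by (rule sum.inter_filter) simp
  show ?thesis unfolding e s f ..
qed

lemma fmul_gen: "fmul (gen a) (gen b) = wd [a, b]"
  using tens_wd unfolding tens_def .

lemma Omega_op_apply: "Omega_op p w = (\<Sum>i\<in>{1..p}. \<Sum>j\<in>{1..p}. if i < j then Zw p i j w else 0)"
proof -
  have "Omega_op p = (\<Sum>i\<in>{1..p}. \<Sum>j\<in>{1..p}. if i < j then fmul (gen (Xm p i j)) (gen (Xm p j i)) else 0)"
    unfolding Omega_op_def by (rule pairsum)
  also have "\<dots> = (\<Sum>i\<in>{1..p}. \<Sum>j\<in>{1..p}. if i < j then Zw p i j else 0)"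
  proof (intro sum.cong refl)
    fix i j assume "i \<in> {1..p}" "j \<in> {1..p}"
    then have "Xvee p i j = Xm p j i" unfolding Xvee_def Xm_swap[of p j i] neg_eq_msc by simp
    then show "(if i < j then fmul (gen (Xm p i j)) (gen (Xm p j i)) else 0) = (if i < j then Zw p i j else 0)"
      unfolding Zw_def Yw_def fmul_gen by simp
  qed
  finally show ?thesis by (simp add: sum_fapply if_fapply)
qed

lemma Omega_oq_apply: "Omega_oq p q w = (\<Sum>i\<in>{p+1..p+q}. \<Sum>j\<in>{p+1..p+q}. if i < j then Zw p i j w else 0)"
proof -
  have "Omega_oq p q = (\<Sum>i\<in>{p+1..p+q}. \<Sum>j\<in>{p+1..p+q}. if i < j then fmul (gen (Xm p i j)) (gen (Xm p j i)) else 0)"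
    unfolding Omega_oq_def by (rule pairsum)
  also have "\<dots> = (\<Sum>i\<in>{p+1..p+q}. \<Sum>j\<in>{p+1..p+q}. if i < j then Zw p i j else 0)"
  proof (intro sum.cong refl)
    fix i j assume "i \<in> {p+1..p+q}" "j \<in> {p+1..p+q}"
    then have "Xvee p i j = Xm p j i" unfolding Xvee_def Xm_swap[of p j i] neg_eq_msc by simp
    then show "(if i < j then fmul (gen (Xm p i j)) (gen (Xm p j i)) else 0) = (if i < j then Zw p i j else 0)"
      unfolding Zw_def Yw_def fmul_gen by simp
  qed
  finally show ?thesis by (simp add: sum_fapply if_fapply)
qed

lemma Omega_g_apply: "Omega_g p q w = (\<Sum>i\<in>{1..p+q}. \<Sum>j\<in>{1..p+q}. if i < j then Zw p i j w else 0)"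
proof -
  have "Omega_g p q = (\<Sum>i\<in>{1..p+q}. \<Sum>j\<in>{1..p+q}. if i < j then fmul (gen (Xm p i j)) (gen (Xvee p i j)) else 0)"
    unfolding Omega_g_def by (rule pairsum)
  also have "\<dots> = (\<Sum>i\<in>{1..p+q}. \<Sum>j\<in>{1..p+q}. if i < j then Zw p i j else 0)"
    unfolding Zw_def Yw_def fmul_gen by (intro sum.cong refl) simp
  finally show ?thesis by (simp add: sum_fapply if_fapply)
qed

lemma EE_Z: "EE (\<lambda>i k. Zw p i k) p q = Omega_op p - Omega_oq p q
      - fscale ((of_nat p - of_nat q) / (of_nat p + of_nat q)) (Omega_g p q)"
proof (intro ext)
  fix w
  have sym: "Zw p i k w = Zw p k i w" for i k using Zw_sym by metis
  have diag: "Zw p i i w = 0" for i unfolding Zw_def by simp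
  show "EE (\<lambda>i k. Zw p i k) p q w = (Omega_op p - Omega_oq p q
      - fscale ((of_nat p - of_nat q) / (of_nat p + of_nat q)) (Omega_g p q)) w"
    unfolding EE_apply fun_diff_def fscale_apply Omega_op_apply Omega_oq_apply Omega_g_apply
    by (rule key[where z = "\<lambda>i k. Zw p i k w", OF sym diag])
qed

theorem lemma3p3:
  fixes p q :: nat
  shows "ueq p q (gamma2 (Xi p q))
     (Omega_op p - Omega_oq p q
      - fscale ((of_nat p - of_nat q) / (of_nat p + of_nat q)) (Omega_g p q))"
proof -
  have "Xi p q - (Omega_op p - Omega_oq p q
      - fscale ((of_nat p - of_nat q) / (of_nat p + of_nat q)) (Omega_g p q))
      = EE (\<lambda>i k. Tw p q i k - Zw p i k) p q"
    unfolding Xi_EE EE_Z[symmetric] EE_diff ..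
  also have "\<dots> \<in> uideal (p+q) (gpq p q)"
    by (rule EE_in) (rule TZ)
  finally show ?thesis unfolding ueq_def gamma2_def .
qed

end
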